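(* Let $L$ be a reduced Latin square of order $n$ with rows $\sigma_1,\dots,\sigma_n$ and columns $\pi_1,\dots,\pi_n$ (as permutations). For each $k\in[n]$ let $I_k$ be the set of permutations $\alpha\in S_n$ such that for every $i\in[n]$ the permutations $\sigma_{\alpha(i)}$ and $\sigma_k^{-1}\sigma_i$ have the same cycle structure (this set is empty unless the multiset of cycle structures of $\{\sigma_k^{-1}\sigma_i\}_{i=1}^n$ coincides with the multiset of cycle structures of $\{\sigma_i\}_{i=1}^n$). For $\alpha\in S_n$ and $j\in[n]$ let $\Theta_{\alpha,j}=(\alpha,\ \alpha\pi_j\sigma_{\alpha^{-1}(1)}^{-1},\ \alpha\pi_j)$. Then $$\mathfrak A(L)=\{\Theta_{\alpha,j}:\ \alpha\in\textstyle\bigcup_{k=1}^n I_k,\ j\in[n],\ \Theta_{\alpha,j}(L)=L\}.$$ In other words, the algorithm that computes the cycle structures of the rows, forms the sets $I_k$, and for each $\alpha\in\bigcup_k I_k$ and each $j$ tests whether $\Theta_{\alpha,j}(L)=L$, outputs exactly the autotopy group $\mathfrak A(L)$.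
   Context: A Latin square of order $n$ is an $n\times n$ array with entries in $[n]$, each symbol once in each row and column. Permutations compose right to left. An isotopism $(\alpha,\beta,\gamma)\in S_n^3$ acts by $(\alpha,\beta,\gamma)(L)=L'$ with $L'(\alpha(r),\beta(c))=\gamma(L(r,c))$; $\mathfrak A(L)=\{\Theta\in S_n^3:\Theta(L)=L\}$ is the autotopy group. Rows and columns are viewed as permutations: if symbol $i$ appears in the $j$th place of a row (column) $\sigma$, then $\sigma(i)=j$; so row $r$ is $\sigma_r$ with $\sigma_r(L(r,c))=c$ and column $c$ is $\pi_c$ with $\pi_c(L(r,c))=r$. $L$ is reduced if its first row and first column are the identity permutation. The cycle structure of a permutation is the multiset of lengths of cycles in its disjoint cycle decomposition. *)

theory Defs
  imports "HOL-Combinatorics.Combinatorics" "HOL-Library.Multiset"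
begin

text \<open>Symbols, rows and columns are indexed by [n] = {1..n}.
  A square is a function L :: nat => nat => nat; only its values on [n] x [n] matter.\<close>

definition latin_square :: "nat \<Rightarrow> (nat \<Rightarrow> nat \<Rightarrow> nat) \<Rightarrow> bool" where
  "latin_square n L \<longleftrightarrow>
     (\<forall>r\<in>{1..n}. bij_betw (\<lambda>c. L r c) {1..n} {1..n}) \<and>
     (\<forall>c\<in>{1..n}. bij_betw (\<lambda>r. L r c) {1..n} {1..n})"

definition row_perm :: "nat \<Rightarrow> (nat \<Rightarrow> nat \<Rightarrow> nat) \<Rightarrow> nat \<Rightarrow> nat \<Rightarrow> nat" where
  "row_perm n L r = (\<lambda>s. if s \<in> {1..n} then (THE c. c \<in> {1..n} \<and> L r c = s) else s)"

definition col_perm :: "nat \<Rightarrow> (nat \<Rightarrow> nat \<Rightarrow> nat) \<Rightarrow> nat \<Rightarrow> nat \<Rightarrow> nat" where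
  "col_perm n L c = (\<lambda>s. if s \<in> {1..n} then (THE r. r \<in> {1..n} \<and> L r c = s) else s)"

definition reduced :: "nat \<Rightarrow> (nat \<Rightarrow> nat \<Rightarrow> nat) \<Rightarrow> bool" where
  "reduced n L \<longleftrightarrow> row_perm n L 1 = id \<and> col_perm n L 1 = id"

text \<open>Isotopism action: L'(alpha r, beta c) = gamma (L r c).\<close>
definition isotope ::
  "(nat \<Rightarrow> nat) \<times> (nat \<Rightarrow> nat) \<times> (nat \<Rightarrow> nat) \<Rightarrow> (nat \<Rightarrow> nat \<Rightarrow> nat) \<Rightarrow> (nat \<Rightarrow> nat \<Rightarrow> nat)" where
  "isotope \<Theta> L = (case \<Theta> of (\<alpha>, \<beta>, \<gamma>) \<Rightarrow> (\<lambda>r c. \<gamma> (L (inv \<alpha> r) (inv \<beta> c))))"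

definition is_isotopism :: "nat \<Rightarrow> (nat \<Rightarrow> nat) \<times> (nat \<Rightarrow> nat) \<times> (nat \<Rightarrow> nat) \<Rightarrow> bool" where
  "is_isotopism n \<Theta> \<longleftrightarrow> (case \<Theta> of (\<alpha>, \<beta>, \<gamma>) \<Rightarrow>
      \<alpha> permutes {1..n} \<and> \<beta> permutes {1..n} \<and> \<gamma> permutes {1..n})"

definition fixes_square :: "nat \<Rightarrow> (nat \<Rightarrow> nat) \<times> (nat \<Rightarrow> nat) \<times> (nat \<Rightarrow> nat) \<Rightarrow> (nat \<Rightarrow> nat \<Rightarrow> nat) \<Rightarrow> bool" where
  "fixes_square n \<Theta> L \<longleftrightarrow> (\<forall>r\<in>{1..n}. \<forall>c\<in>{1..n}. isotope \<Theta> L r c = L r c)"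

definition autotopy_group :: "nat \<Rightarrow> (nat \<Rightarrow> nat \<Rightarrow> nat) \<Rightarrow> ((nat \<Rightarrow> nat) \<times> (nat \<Rightarrow> nat) \<times> (nat \<Rightarrow> nat)) set" where
  "autotopy_group n L = {\<Theta>. is_isotopism n \<Theta> \<and> fixes_square n \<Theta> L}"

definition cycle_structure :: "nat \<Rightarrow> (nat \<Rightarrow> nat) \<Rightarrow> nat multiset" where
  "cycle_structure n p = image_mset card (mset_set ((\<lambda>x. orbit p x) ` {1..n}))"

definition I_set :: "nat \<Rightarrow> (nat \<Rightarrow> nat \<Rightarrow> nat) \<Rightarrow> nat \<Rightarrow> (nat \<Rightarrow> nat) set" where
  "I_set n L k = {\<alpha>. \<alpha> permutes {1..n} \<and>
     (\<forall>i\<in>{1..n}. cycle_structure n (row_perm n L (\<alpha> i))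
                 = cycle_structure n (inv (row_perm n L k) \<circ> row_perm n L i))}"

definition Theta :: "nat \<Rightarrow> (nat \<Rightarrow> nat \<Rightarrow> nat) \<Rightarrow> (nat \<Rightarrow> nat) \<Rightarrow> nat
                     \<Rightarrow> (nat \<Rightarrow> nat) \<times> (nat \<Rightarrow> nat) \<times> (nat \<Rightarrow> nat)" where
  "Theta n L \<alpha> j = (\<alpha>, \<alpha> \<circ> col_perm n L j \<circ> inv (row_perm n L (inv \<alpha> 1)), \<alpha> \<circ> col_perm n L j)"

end

theory Submission
  imports Defs
begin

lemma L_in:
  assumes "latin_square n L" "r \<in> {1..n}" "c \<in> {1..n}"
  shows "L r c \<in> {1..n}"
  using assms unfolding latin_square_def bij_betw_def by blast

lemma row_perm_L:
  assumes "latin_square n L" "r \<in> {1..n}" "c \<in> {1..n}"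
  shows "row_perm n L r (L r c) = c"
proof -
  have b: "bij_betw (\<lambda>c. L r c) {1..n} {1..n}" using assms unfolding latin_square_def by blast
  have "(THE c'. c' \<in> {1..n} \<and> L r c' = L r c) = c"
    apply (rule the_equality)
    using assms(3) apply simp
    using b assms(3) unfolding bij_betw_def inj_on_def by blast
  then show ?thesis using L_in[OF assms] by (auto simp: row_perm_def)
qed

lemma col_perm_L:
  assumes "latin_square n L" "r \<in> {1..n}" "c \<in> {1..n}"
  shows "col_perm n L c (L r c) = r"
proof -
  have b: "bij_betw (\<lambda>r. L r c) {1..n} {1..n}" using assms unfolding latin_square_def by blast
  have "(THE r'. r' \<in> {1..n} \<and> L r' c = L r c) = r"
    apply (rule the_equality)
    using assms(2) apply simp
    using b assms(2) unfolding bij_betw_def inj_on_def by blast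
  then show ?thesis using L_in[OF assms] by (auto simp: col_perm_def)
qed

lemma row_surj:
  assumes "latin_square n L" "r \<in> {1..n}" "s \<in> {1..n}"
  obtains c where "c \<in> {1..n}" "L r c = s"
proof -
  have b: "bij_betw (\<lambda>c. L r c) {1..n} {1..n}" using assms unfolding latin_square_def by blast
  then show ?thesis using that assms(3) unfolding bij_betw_def by (metis imageE)
qed

lemma col_surj:
  assumes "latin_square n L" "c \<in> {1..n}" "s \<in> {1..n}"
  obtains r where "r \<in> {1..n}" "L r c = s"
proof -
  have b: "bij_betw (\<lambda>r. L r c) {1..n} {1..n}" using assms unfolding latin_square_def by blast
  then show ?thesis using that assms(3) unfolding bij_betw_def by (metis imageE)
qed

lemma row_perm_permutes:
  assumes "latin_square n L" "r \<in> {1..n}"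
  shows "row_perm n L r permutes {1..n}"
proof (rule bij_imp_permutes)
  show "bij_betw (row_perm n L r) {1..n} {1..n}"
  proof (rule bij_betw_byWitness[where f'="L r"])
    show "\<forall>a\<in>{1..n}. L r (row_perm n L r a) = a"
      using assms row_surj row_perm_L by metis
    show "\<forall>a'\<in>{1..n}. row_perm n L r (L r a') = a'" using assms row_perm_L by blast
    show "row_perm n L r ` {1..n} \<subseteq> {1..n}"
      using assms row_surj row_perm_L by (smt (verit) image_subset_iff)
    show "L r ` {1..n} \<subseteq> {1..n}" using assms L_in by blast
  qed
  show "\<And>x. x \<notin> {1..n} \<Longrightarrow> row_perm n L r x = x" by (auto simp: row_perm_def)
qed

lemma col_perm_permutes:
  assumes "latin_square n L" "c \<in> {1..n}"
  shows "col_perm n L c permutes {1..n}"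
proof (rule bij_imp_permutes)
  show "bij_betw (col_perm n L c) {1..n} {1..n}"
  proof (rule bij_betw_byWitness[where f'="\<lambda>r. L r c"])
    show "\<forall>a\<in>{1..n}. L (col_perm n L c a) c = a"
      using assms col_surj col_perm_L by metis
    show "\<forall>a'\<in>{1..n}. col_perm n L c (L a' c) = a'" using assms col_perm_L by blast
    show "col_perm n L c ` {1..n} \<subseteq> {1..n}"
      using assms col_surj col_perm_L by (smt (verit) image_subset_iff)
    show "(\<lambda>r. L r c) ` {1..n} \<subseteq> {1..n}" using assms L_in by blast
  qed
  show "\<And>x. x \<notin> {1..n} \<Longrightarrow> col_perm n L c x = x" by (auto simp: col_perm_def)
qed

lemma inv_row_perm:
  assumes "latin_square n L" "r \<in> {1..n}" "c \<in> {1..n}"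
  shows "inv (row_perm n L r) c = L r c"
  using row_perm_permutes[OF assms(1,2)] row_perm_L[OF assms]
  by (simp add: permutes_inv_eq)

lemma funpow_conj:
  assumes "bij g"
  shows "(g \<circ> q \<circ> inv g) ^^ m = g \<circ> (q ^^ m) \<circ> inv g"
proof (induction m)
  case 0
  then show ?case using assms by (simp add: bij_is_surj surj_f_inv_f fun_eq_iff)
next
  case (Suc m)
  have "inj g" using assms by (simp add: bij_is_inj)
  then show ?case using Suc by (simp add: fun_eq_iff)
qed

lemma orbit_conj:
  assumes "bij g"
  shows "orbit (g \<circ> q \<circ> inv g) (g x) = g ` orbit q x"
proof -
  have "inv g (g x) = x" using assms by (simp add: bij_is_inj)
  then show ?thesis unfolding orbit_altdef funpow_conj[OF assms] by auto
qed

lemma cs_conj: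
  assumes "g permutes {1..n}"
  shows "cycle_structure n (g \<circ> q \<circ> inv g) = cycle_structure n q"
proof -
  have bij: "bij g" using assms permutes_bij by blast
  have "(\<lambda>x. orbit (g \<circ> q \<circ> inv g) x) ` {1..n} = (\<lambda>x. orbit (g \<circ> q \<circ> inv g) (g x)) ` {1..n}"
    using permutes_image[OF assms] by (metis image_image)
  also have "\<dots> = (image g) ` ((\<lambda>x. orbit q x) ` {1..n})"
    using orbit_conj[OF bij] by (simp add: image_image)
  finally have e: "(\<lambda>x. orbit (g \<circ> q \<circ> inv g) x) ` {1..n} = (image g) ` ((\<lambda>x. orbit q x) ` {1..n})" .
  have inj: "inj_on (image g) A" for A :: "nat set set"
    using bij by (meson bij_is_inj inj_image_eq_iff inj_onI)
  have "cycle_structure n (g \<circ> q \<circ> inv g) = image_mset card (image_mset (image g) (mset_set ((\<lambda>x. orbit q x) ` {1..n})))"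
    unfolding cycle_structure_def e image_mset_mset_set[OF inj] ..
  also have "\<dots> = image_mset card (mset_set ((\<lambda>x. orbit q x) ` {1..n}))"
    unfolding multiset.map_comp
    by (rule multiset.map_cong0) (simp add: card_image[OF inj_on_subset[OF bij_is_inj[OF bij] subset_UNIV]])
  finally show ?thesis unfolding cycle_structure_def .
qed

lemma L_row_perm:
  assumes "latin_square n L" "r \<in> {1..n}" "s \<in> {1..n}"
  shows "L r (row_perm n L r s) = s"
  using assms row_surj row_perm_L by metis

theorem theorem5p2:
  fixes n :: nat and L :: "nat \<Rightarrow> nat \<Rightarrow> nat"
  assumes "n \<ge> 1" and "latin_square n L" and "reduced n L"
  shows "autotopy_group n L =
    {Theta n L \<alpha> j | \<alpha> j. \<alpha> \<in> (\<Union>k\<in>{1..n}. I_set n L k) \<and> j \<in> {1..n}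
                          \<and> fixes_square n (Theta n L \<alpha> j) L}"
proof -
  let ?S = "{1..n::nat}"
  note ls = assms(2)
  have one: "1 \<in> ?S" using assms(1) by simp
  have Lrow1: "L 1 c = c" if "c \<in> ?S" for c
    using row_perm_L[OF ls one that] assms(3) unfolding reduced_def by simp
  have Lcol1: "L r 1 = r" if "r \<in> ?S" for r
    using col_perm_L[OF ls that one] assms(3) unfolding reduced_def by simp
  show ?thesis
  proof (rule set_eqI, rule iffI)
    fix \<Theta> assume A: "\<Theta> \<in> autotopy_group n L"
    obtain \<alpha> \<beta> \<gamma> where T: "\<Theta> = (\<alpha>,\<beta>,\<gamma>)" by (cases \<Theta>) auto
    have pa: "\<alpha> permutes ?S" and pb: "\<beta> permutes ?S" and pg: "\<gamma> permutes ?S"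
      using A T unfolding autotopy_group_def is_isotopism_def by auto
    have fx: "\<gamma> (L (inv \<alpha> r) (inv \<beta> c)) = L r c" if "r \<in> ?S" "c \<in> ?S" for r c
      using A T that unfolding autotopy_group_def fixes_square_def isotope_def by auto
    have key: "\<gamma> (L r c) = L (\<alpha> r) (\<beta> c)" if "r \<in> ?S" "c \<in> ?S" for r c
      using fx[of "\<alpha> r" "\<beta> c"] that permutes_in_image[OF pa] permutes_in_image[OF pb]
        permutes_inverses[OF pa] permutes_inverses[OF pb] by simp
    define r0 where "r0 = inv \<alpha> 1"
    define j where "j = inv \<beta> 1"
    have r0S: "r0 \<in> ?S" unfolding r0_def using permutes_in_image[OF permutes_inv[OF pa]] one by simp
    have jS: "j \<in> ?S" unfolding j_def using permutes_in_image[OF permutes_inv[OF pb]] one by simp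
    have ar0: "\<alpha> r0 = 1" unfolding r0_def using permutes_inverses[OF pa] by simp
    have bj: "\<beta> j = 1" unfolding j_def using permutes_inverses[OF pb] by simp
    have hg: "\<gamma> = \<alpha> \<circ> col_perm n L j"
    proof
      fix s
      show "\<gamma> s = (\<alpha> \<circ> col_perm n L j) s"
      proof (cases "s \<in> ?S")
        case True
        then obtain r where r: "r \<in> ?S" "L r j = s" using col_surj[OF ls jS] by blast
        have "\<gamma> s = L (\<alpha> r) (\<beta> j)" using key[OF r(1) jS] r by simp
        also have "\<dots> = \<alpha> r" using bj Lcol1 permutes_in_image[OF pa] r(1) by simp
        finally show ?thesis using col_perm_L[OF ls r(1) jS] r by simp
      next
        case False
        then show ?thesis using permutes_not_in[OF pg] permutes_not_in[OF pa]
          by (auto simp: col_perm_def)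
      qed
    qed
    have hb0: "\<beta> c = \<gamma> (L r0 c)" if "c \<in> ?S" for c
      using key[OF r0S that] ar0 Lrow1 permutes_in_image[OF pb] that by simp
    have hb: "\<beta> = \<alpha> \<circ> col_perm n L j \<circ> inv (row_perm n L r0)"
    proof
      fix c
      show "\<beta> c = (\<alpha> \<circ> col_perm n L j \<circ> inv (row_perm n L r0)) c"
      proof (cases "c \<in> ?S")
        case True
        then show ?thesis using hb0[OF True] hg inv_row_perm[OF ls r0S True] by simp
      next
        case False
        then show ?thesis
          using permutes_not_in[OF pb] permutes_not_in[OF pa]
            permutes_not_in[OF permutes_inv[OF row_perm_permutes[OF ls r0S]]]
          by (auto simp: col_perm_def)
      qed
    qed
    have TT: "\<Theta> = Theta n L \<alpha> j" unfolding T Theta_def hg hb r0_def ..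
    have conj: "row_perm n L (\<alpha> i) = \<gamma> \<circ> (inv (row_perm n L r0) \<circ> row_perm n L i) \<circ> inv \<gamma>"
      if iS: "i \<in> ?S" for i
    proof
      fix s
      have aiS: "\<alpha> i \<in> ?S" using permutes_in_image[OF pa] iS by simp
      show "row_perm n L (\<alpha> i) s = (\<gamma> \<circ> (inv (row_perm n L r0) \<circ> row_perm n L i) \<circ> inv \<gamma>) s"
      proof (cases "s \<in> ?S")
        case True
        define t where "t = inv \<gamma> s"
        have tS: "t \<in> ?S" unfolding t_def using permutes_in_image[OF permutes_inv[OF pg]] True by simp
        have gt: "\<gamma> t = s" unfolding t_def using permutes_inverses[OF pg] by simp
        define c where "c = row_perm n L i t"
        have cS: "c \<in> ?S" unfolding c_def using permutes_in_image[OF row_perm_permutes[OF ls iS]] tS by simp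
        have Lc: "L i c = t" unfolding c_def using L_row_perm[OF ls iS tS] .
        have "row_perm n L (\<alpha> i) s = row_perm n L (\<alpha> i) (L (\<alpha> i) (\<beta> c))"
          using key[OF iS cS] Lc gt by simp
        also have "\<dots> = \<beta> c" using row_perm_L[OF ls aiS] permutes_in_image[OF pb] cS by simp
        also have "\<dots> = \<gamma> (inv (row_perm n L r0) c)" using hb0[OF cS] inv_row_perm[OF ls r0S cS] by simp
        finally show ?thesis unfolding c_def t_def by simp
      next
        case False
        then show ?thesis
          using permutes_not_in[OF pg] permutes_not_in[OF permutes_inv[OF pg]]
            permutes_not_in[OF permutes_inv[OF row_perm_permutes[OF ls r0S]]]
          by (auto simp: row_perm_def)
      qed
    qed
    have "\<alpha> \<in> I_set n L r0"
      unfolding I_set_def using pa conj cs_conj[OF pg] by simp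
    moreover have "fixes_square n (Theta n L \<alpha> j) L"
      using A TT unfolding autotopy_group_def by simp
    ultimately show "\<Theta> \<in> {Theta n L \<alpha> j | \<alpha> j. \<alpha> \<in> (\<Union>k\<in>{1..n}. I_set n L k) \<and> j \<in> {1..n}
                          \<and> fixes_square n (Theta n L \<alpha> j) L}"
      using TT r0S jS by blast
  next
    fix \<Theta> assume "\<Theta> \<in> {Theta n L \<alpha> j | \<alpha> j. \<alpha> \<in> (\<Union>k\<in>{1..n}. I_set n L k) \<and> j \<in> {1..n}
                          \<and> fixes_square n (Theta n L \<alpha> j) L}"
    then obtain \<alpha> j k where T: "\<Theta> = Theta n L \<alpha> j" and k: "k \<in> ?S" "\<alpha> \<in> I_set n L k"
      and jS: "j \<in> ?S" and fs: "fixes_square n (Theta n L \<alpha> j) L" by blast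
    have pa: "\<alpha> permutes ?S" using k unfolding I_set_def by simp
    have r0S: "inv \<alpha> 1 \<in> ?S" using permutes_in_image[OF permutes_inv[OF pa]] one by simp
    have pc: "col_perm n L j permutes ?S" using col_perm_permutes[OF ls jS] .
    have pr: "inv (row_perm n L (inv \<alpha> 1)) permutes ?S"
      using permutes_inv[OF row_perm_permutes[OF ls r0S]] .
    have "is_isotopism n \<Theta>"
      unfolding T Theta_def is_isotopism_def
      using pa pc pr by (simp add: permutes_compose)
    then show "\<Theta> \<in> autotopy_group n L" using fs T unfolding autotopy_group_def by simp
  qed
qed

end
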